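(* For $k\ge4$, $\Phi_k(2^{k-1}k\log2,\,x)<0$ for all $x\in[\frac12-\frac1{2^k},\frac12]$.
   Context: $\Phi_k(d,x)=-\log(1-x)-d(1-k^{-1}-d^{-1})\log(1-2x^k)+(d-1)\log(1-x^{k-1})$. *)

theory Defs
  imports Complex_Main
begin

definition Phi :: "nat \<Rightarrow> real \<Rightarrow> real \<Rightarrow> real" where
  "Phi k d x = - ln (1 - x) - d * (1 - 1 / real k - 1 / d) * ln (1 - 2 * x ^ k)
      + (d - 1) * ln (1 - x ^ (k - 1))"

end

theory Submission
  imports Defs
begin

lemma alg_aux: "(a::real) \<noteq> 0 \<Longrightarrow> 1 + (2*(1-a)*(2*a) + (1-a)^2*2)/(2*a)^2 + (-1)/a = (1-a)^2/(2*a^2)"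
  by (simp add: field_simps power2_eq_square)

lemma fA_bound:
  fixes y :: real assumes "0 \<le> y" "y < 1"
  shows "- ln (1 - y) \<le> y + y^2 / (2 * (1 - y))"
proof -
  let ?g = "\<lambda>z::real. z + z^2 / (2 * (1 - z)) + ln (1 - z)"
  have "?g 0 \<le> ?g y"
  proof (rule DERIV_nonneg_imp_nondecreasing[OF assms(1)])
    fix z :: real assume z: "0 \<le> z" "z \<le> y"
    hence z1: "z < 1" using assms by auto
    have "DERIV ?g z :> 1 + (2*z*(2*(1-z)) + z^2*2) / (2*(1-z))^2 + (-1)/(1-z)"
      using z1 by (auto intro!: derivative_eq_intros simp: power2_eq_square)
    moreover have "1 + (2*z*(2*(1-z)) + z^2*2) / (2*(1-z))^2 + (-1)/(1-z) = z^2 / (2*(1-z)^2)"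
      using alg_aux[of "1-z"] z1 by simp
    moreover have "z^2 / (2*(1-z)^2) \<ge> 0" by simp
    ultimately show "\<exists>y. DERIV ?g z :> y \<and> 0 \<le> y" by metis
  qed
  thus ?thesis by simp
qed

lemma fB_bound:
  fixes y :: real assumes "0 \<le> y" "y < 1"
  shows "- ln (1 - y) \<ge> y + y^2 / 2"
proof -
  let ?g = "\<lambda>z::real. - ln (1 - z) - z - z^2 / 2"
  have "?g 0 \<le> ?g y"
  proof (rule DERIV_nonneg_imp_nondecreasing[OF assms(1)])
    fix z :: real assume z: "0 \<le> z" "z \<le> y"
    hence z1: "z < 1" using assms by auto
    have "DERIV ?g z :> - ((-1)/(1-z)) - 1 - 2*z/2"
      using z1 by (auto intro!: derivative_eq_intros simp: power2_eq_square)
    moreover have "- ((-1)/(1-z)) - 1 - 2*z/2 = z^2 / (1-z)"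
      using z1 by (simp add: field_simps power2_eq_square)
    moreover have "z^2 / (1-z) \<ge> 0" using z1 by simp
    ultimately show "\<exists>y. DERIV ?g z :> y \<and> 0 \<le> y" by metis
  qed
  thus ?thesis by simp
qed

lemma bern_aux:
  fixes v :: real assumes "0 \<le> v" "v \<le> 1"
  shows "1 - (1-v)^n * (1 + real n * v) \<le> real n * (real n + 1) / 2 * v^2"
proof (induction n)
  case 0 then show ?case by simp
next
  case (Suc n)
  have e: "(1-v)^(Suc n) * (1 + real (Suc n) * v) = (1-v)^n * (1 + real n * v) - (real n + 1) * v^2 * (1-v)^n"
    by (simp add: algebra_simps power2_eq_square)
  have "(1-v)^n \<le> 1" using assms by (simp add: power_le_one)
  hence "(real n + 1) * v^2 * (1-v)^n \<le> (real n + 1) * v^2" by (simp add: mult_left_le)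
  with Suc e show ?case by (simp add: algebra_simps power2_eq_square)
qed

lemma pow_a: "k \<ge> 4 \<Longrightarrow> 4 * k \<le> (2::nat)^k"
proof (induction k rule: nat_induct_at_least)
  case base then show ?case by simp
next
  case (Suc n) then show ?case by simp
qed

lemma pow_b: "k \<ge> 4 \<Longrightarrow> 4 * k * (k - 1) \<le> 3 * (2::nat)^k"
proof (induction k rule: nat_induct_at_least)
  case base then show ?case by simp
next
  case (Suc n)
  have "4 * Suc n * n \<le> 2 * (4 * n * (n - 1))" using Suc(1) 
  proof (cases n)
    case 0 then show ?thesis using Suc(1) by simp
  next
    case (Suc m)
    have m3: "m \<ge> 3" using Suc \<open>4 \<le> n\<close> by simp
    have "m * (m * 4) \<ge> 3 * (m * 4)" using m3 by (intro mult_right_mono) auto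
    moreover have "8 + m*4 \<le> 3 * (m * 4)" using m3 by simp
    ultimately have "8 + m*4 \<le> m * (m * 4)" by (rule order_trans[rotated])
    then show ?thesis using Suc by (simp add: algebra_simps)
  qed
  also have "\<dots> \<le> 2 * (3 * 2^n)" using Suc(2) by simp
  finally show ?case by simp
qed

lemma ln2_ge: "ln (2::real) \<ge> 5/8"
proof -
  have "- ln (1 - 1/2) \<ge> (1/2::real) + (1/2)^2/2" by (rule fB_bound) auto
  moreover have "- ln (1 - 1/2::real) = ln 2" by (simp add: ln_div)
  moreover have "(1/2::real) + (1/2)^2/2 = 5/8" by (simp add: power2_eq_square)
  ultimately show ?thesis by linarith
qed

theorem lemma3p6:
  fixes k :: nat and x :: real
  assumes "k \<ge> 4"
    and "1/2 - 1 / 2 ^ k \<le> x" and "x \<le> 1/2"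
  shows "Phi k (2 ^ (k - 1) * real k * ln 2) x < 0"
proof -
  define t :: real where "t = 1 / 2^(k-1)"
  define w where "w = 2 * x"
  define v where "v = 1 - w"
  define p where "p = w^(k-1)"
  define L :: real where "L = ln 2"
  define d :: real where "d = 2 ^ (k - 1) * real k * ln 2"
  define A where "A = t * w * p"
  define B where "B = t * p"
  define c1 where "c1 = d * (1 - 1 / real k) - 1"
  define c2 where "c2 = d - 1"
  have k1: "k = Suc (k - 1)" using assms(1) by simp
  have hk: "(2::real)^k = 2 * 2^(k-1)" by (subst k1) simp
  have t8: "(2::real)^(k-1) \<ge> 8"
  proof -
    have "(2::real)^3 \<le> 2^(k-1)" by (rule power_increasing) (use assms(1) in auto)
    thus ?thesis by simp
  qed
  have tpos: "t > 0" unfolding t_def by simp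
  have tle: "t \<le> 1/8" unfolding t_def using t8 by (simp add: field_simps)
  have kpos: "real k \<ge> 4" using assms(1) by simp
  have kt: "real k * t \<le> 1/2"
  proof -
    have "real (4 * k) \<le> real ((2::nat)^k)" using pow_a[OF assms(1)] by (simp only: of_nat_le_iff)
    hence "4 * real k \<le> 2 * 2^(k-1)" using hk by simp
    thus ?thesis unfolding t_def using t8 by (simp add: field_simps)
  qed
  have kkt: "real k * (real k - 1) * t \<le> 3/2"
  proof -
    have "real (4 * k * (k - 1)) \<le> real (3 * (2::nat)^k)" using pow_b[OF assms(1)] by (simp only: of_nat_le_iff)
    hence "4 * real k * (real k - 1) \<le> 3 * (2 * 2^(k-1))" using hk assms(1) by (simp add: of_nat_diff)
    thus ?thesis unfolding t_def using t8 by (simp add: field_simps)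
  qed
  have v0: "0 \<le> v" unfolding v_def w_def using assms(3) by simp
  have vt: "v \<le> t"
  proof -
    have "1 / (2::real)^k = t / 2" unfolding t_def hk by simp
    thus ?thesis unfolding v_def w_def using assms(2) by simp
  qed
  have wv: "w = 1 - v" unfolding v_def by simp
  have w0: "0 < w" "w \<le> 1" using wv v0 vt tle by auto
  have p0: "0 < p" "p \<le> 1" unfolding p_def using w0 by (auto simp: power_le_one)
  have xw: "x = w / 2" unfolding w_def by simp
  have xk: "2 * x^k = A"
  proof -
    have "w^k = w * p" unfolding p_def by (subst k1) simp
    thus ?thesis unfolding xw A_def t_def power_divide hk by simp
  qed
  have xk1: "x^(k-1) = B"
    unfolding xw B_def t_def p_def power_divide by simp
  have A0: "0 \<le> A" unfolding A_def using tpos w0 p0 by simp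
  have AB: "A \<le> B" unfolding A_def B_def using tpos w0 p0 by (simp add: mult_left_le)
  have B0: "0 < B" unfolding B_def using tpos p0 by simp
  have Bt: "B \<le> t" unfolding B_def using tpos p0 by (simp add: mult_left_le)
  have dt: "d * t = real k * L" unfolding d_def t_def L_def by simp
  have L58: "5/8 \<le> L" unfolding L_def by (rule ln2_ge)
  have L1: "L < 1" unfolding L_def by (rule ln_2_less_1)
  have d20: "d \<ge> 20"
  proof -
    have "d = 2^(k-1) * real k * L" unfolding d_def L_def by simp
    moreover have "2^(k-1) * real k * L \<ge> 8 * 4 * (5/8)" using t8 kpos L58
      by (intro mult_mono) auto
    ultimately show ?thesis by simp
  qed
  have c1pos: "c1 \<ge> 0"
  proof -
    have "1 / real k \<le> 1/4" using kpos by (simp add: field_simps)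
    hence "d * (1 - 1/real k) \<ge> d * (3/4)" using d20 by (intro mult_left_mono) auto
    thus ?thesis unfolding c1_def using d20 by linarith
  qed
  have c2pos: "c2 \<ge> 0" unfolding c2_def using d20 by simp
  have kne: "real k \<noteq> 0" using kpos by simp
  have dne: "d \<noteq> 0" using d20 by simp
  have lnx: "- ln (1 - x) = L - ln (1 + v)"
  proof -
    have "1 - x = (1 + v) / 2" unfolding xw wv by (simp add: field_simps)
    moreover have "ln ((1 + v) / 2) = ln (1 + v) - ln 2" using v0 by (simp add: ln_div)
    ultimately show ?thesis unfolding L_def by (metis minus_diff_eq)
  qed
  have At1: "A < 1" using AB Bt tle by simp
  have Bt1: "B < 1" using Bt tle by simp
  have PhiE: "Phi k d x = L - ln (1 + v) + c1 * (- ln (1 - A)) - c2 * (- ln (1 - B))"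
  proof -
    have "d * (1 - 1 / real k - 1 / d) = c1" unfolding c1_def using dne by (simp add: algebra_simps)
    thus ?thesis unfolding Phi_def lnx xk xk1 c2_def by simp
  qed
  have fA: "- ln (1 - A) \<le> A + A^2 / (2 * (1 - A))" by (rule fA_bound[OF A0 At1])
  have fB: "- ln (1 - B) \<ge> B + B^2 / 2" by (rule fB_bound) (use B0 Bt1 in auto)
  have step1: "Phi k d x \<le> L - ln (1 + v) + c1 * (A + A^2 / (2 * (1 - A))) - c2 * (B + B^2 / 2)"
  proof -
    have "c1 * (- ln (1 - A)) \<le> c1 * (A + A^2 / (2 * (1 - A)))" using fA c1pos by (rule mult_left_mono)
    moreover have "c2 * (B + B^2 / 2) \<le> c2 * (- ln (1 - B))" using fB c2pos by (rule mult_left_mono)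
    ultimately show ?thesis unfolding PhiE by linarith
  qed
  have E1: "c1 * A - c2 * B = L * p * ((real k - 1) * w - real k) + t * p * v"
  proof -
    have "c1 * A - c2 * B = (d * t) * p * ((1 - 1 / real k) * w - 1) + t * p * (1 - w)"
      unfolding c1_def c2_def A_def B_def by (simp add: algebra_simps)
    also have "\<dots> = L * p * ((real k - 1) * w - real k) + t * p * v"
      unfolding dt v_def using kne by (simp add: field_simps)
    finally show ?thesis .
  qed
  have E2: "L + L * p * ((real k - 1) * w - real k) = L * (1 - (1 - v)^(k-1) * (1 + real (k-1) * v))"
    unfolding p_def wv using assms(1) by (simp add: of_nat_diff algebra_simps)
  have bern: "1 - (1 - v)^(k-1) * (1 + real (k-1) * v) \<le> (real k - 1) * real k / 2 * v^2"
  proof -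
    have "1 - (1 - v)^(k-1) * (1 + real (k-1) * v) \<le> real (k-1) * (real (k-1) + 1) / 2 * v^2"
      by (rule bern_aux) (use v0 vt tle in auto)
    thus ?thesis using assms(1) by (simp add: of_nat_diff)
  qed
  have g1: "L + L * p * ((real k - 1) * w - real k) \<le> 3/4 * v"
  proof -
    have "L + L * p * ((real k - 1) * w - real k) \<le> L * ((real k - 1) * real k / 2 * v^2)"
      unfolding E2 using bern L58 by (intro mult_left_mono) auto
    also have "\<dots> \<le> 1 * ((real k - 1) * real k / 2 * v^2)"
      using L1 kpos by (intro mult_right_mono) auto
    also have "\<dots> = ((real k - 1) * real k * v / 2) * v" by (simp add: power2_eq_square)
    also have "\<dots> \<le> ((real k - 1) * real k * t / 2) * v"
      using v0 vt kpos by (intro mult_right_mono) (auto intro!: mult_left_mono)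
    also have "\<dots> \<le> (3/4) * v" using kkt v0 by (intro mult_right_mono) (auto simp: algebra_simps)
    finally show ?thesis .
  qed
  have g2: "t * p * v \<le> v / 8"
  proof -
    have pv: "p * v \<le> v" using p0 v0 by (simp add: mult_left_le_one_le)
    have "t * (p * v) \<le> t * v" using pv tpos by (intro mult_left_mono) auto
    hence "t * p * v \<le> t * v" by (simp add: mult.assoc)
    also have "\<dots> \<le> (1/8) * v" using tle v0 by (intro mult_right_mono) auto
    also have "\<dots> = v / 8" by simp
    finally show ?thesis .
  qed
  have g3: "- ln (1 + v) \<le> - v + v / 8"
  proof -
    have "v - v^2 \<le> ln (1 + v)" by (rule ln_one_plus_pos_lower_bound) (use v0 vt tle in auto)
    moreover have "v^2 \<le> v / 8"
    proof -
      have "v^2 = v * v" by (simp add: power2_eq_square)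
      also have "\<dots> \<le> (1/8) * v" using v0 vt tle by (intro mult_right_mono) auto
      finally show ?thesis by simp
    qed
    ultimately show ?thesis by linarith
  qed
  have first: "L - ln (1 + v) + c1 * A - c2 * B \<le> 0"
    using E1 g1 g2 g3 by linarith
  define Q where "Q = d * (1 - 1 / real k) - (d - 1) * (1 - t)"
  have Qneg: "Q < 0"
  proof -
    have "Q * t = - L + real k * L * t + t - t^2"
    proof -
      have "Q * t = (d * t) * (1 - 1 / real k) - (d * t - t) * (1 - t)" unfolding Q_def by (simp add: algebra_simps)
      also have "\<dots> = - L + real k * L * t + t - t^2" unfolding dt using kne by (simp add: field_simps power2_eq_square)
      finally show ?thesis .
    qed
    moreover have "L * (real k * t) \<le> L * (1/2)" using kt L58 by (intro mult_left_mono) auto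
    moreover have "t^2 \<ge> 0" by simp
    moreover have "real k * L * t = L * (real k * t)" by (simp add: algebra_simps)
    ultimately have "Q * t < 0" using L58 tle by linarith
    thus ?thesis using tpos by (simp add: mult_less_0_iff)
  qed
  have second: "c1 * (A^2 / (2 * (1 - A))) - c2 * (B^2 / 2) < 0"
  proof -
    have "A^2 / (2 * (1 - A)) \<le> B^2 / (2 * (1 - t))"
    proof (rule frac_le)
      show "0 \<le> B^2" by simp
      show "A^2 \<le> B^2" using A0 AB by (simp add: power_mono)
      show "0 < 2 * (1 - t)" using tle by simp
      show "2 * (1 - t) \<le> 2 * (1 - A)" using AB Bt by simp
    qed
    hence "c1 * (A^2 / (2 * (1 - A))) \<le> c1 * (B^2 / (2 * (1 - t)))" using c1pos by (rule mult_left_mono)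
    also have "\<dots> \<le> d * (1 - 1 / real k) * (B^2 / (2 * (1 - t)))"
      unfolding c1_def using tle by (intro mult_right_mono) auto
    finally have h: "c1 * (A^2 / (2 * (1 - A))) \<le> d * (1 - 1 / real k) * (B^2 / (2 * (1 - t)))" .
    have "d * (1 - 1 / real k) * (B^2 / (2 * (1 - t))) - c2 * (B^2 / 2) = Q * (B^2 / (2 * (1 - t)))"
      unfolding Q_def c2_def using tle by (simp add: field_simps)
    moreover have "Q * (B^2 / (2 * (1 - t))) < 0"
    proof -
      have "B^2 / (2 * (1 - t)) > 0" using B0 tle by (intro divide_pos_pos) auto
      thus ?thesis by (rule mult_neg_pos[OF Qneg])
    qed
    ultimately show ?thesis using h by linarith
  qed
  have "Phi k d x < 0"
  proof -
    have "L - ln (1 + v) + c1 * (A + A^2 / (2 * (1 - A))) - c2 * (B + B^2 / 2)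
        = (L - ln (1 + v) + c1 * A - c2 * B) + (c1 * (A^2 / (2 * (1 - A))) - c2 * (B^2 / 2))"
      by (simp add: algebra_simps)
    thus ?thesis using step1 first second by linarith
  qed
  thus ?thesis unfolding d_def .
qed

end
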